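(* Let $G$ and $H$ be finite graphs. Then \[ n(G)\,\gamma(H)-m(G)\;\le\; \gamma_{\rm S}(G,H)\;\le\; \Gamma_{\rm S}(G,H)\;\le\; n(G)\,\gamma(H), \] where $n(G)=|V(G)|$ and $m(G)=|E(G)|$.
   Context: All graphs are finite and simple; $\gamma(X)$ denotes the domination number of a graph $X$ (the minimum size of a set $S$ of vertices such that every vertex is in $S$ or adjacent to a vertex of $S$). For graphs $G,H$ and a function $f\colon V(G)\to V(H)$, the Sierpiński product $G\otimes_f H$ is the graph with vertex set $V(G)\times V(H)$ and edges of two types: (type 1) $(g,h)(g,h')$ for every $g\in V(G)$ and every edge $hh'\in E(H)$; (type 2) $(g,f(g'))(g',f(g))$ for every edge $gg'\in E(G)$. The Sierpiński domination number is $\gamma_{\rm S}(G,H)=\min_{f}\gamma(G\otimes_f H)$ and the upper Sierpiński domination number is $\Gamma_{\rm S}(G,H)=\max_{f}\gamma(G\otimes_f H)$, where $f$ ranges over all functions $V(G)\to V(H)$. *)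

theory Defs
  imports "HOL-Library.FuncSet"
begin

definition graph :: "'a set \<Rightarrow> 'a set set \<Rightarrow> bool" where
  "graph V E \<longleftrightarrow> finite V \<and> (\<forall>e\<in>E. e \<subseteq> V \<and> card e = 2)"

definition dominating :: "'a set \<Rightarrow> 'a set set \<Rightarrow> 'a set \<Rightarrow> bool" where
  "dominating V E S \<longleftrightarrow> S \<subseteq> V \<and> (\<forall>v\<in>V. v \<in> S \<or> (\<exists>u\<in>S. {u, v} \<in> E))"

definition domination_number :: "'a set \<Rightarrow> 'a set set \<Rightarrow> nat" where
  "domination_number V E = Min (card ` {S. dominating V E S})"

definition sierp_verts :: "'a set \<Rightarrow> 'b set \<Rightarrow> ('a \<times> 'b) set" where
  "sierp_verts VG VH = VG \<times> VH"

definition sierp_edges ::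
  "'a set \<Rightarrow> 'a set set \<Rightarrow> 'b set \<Rightarrow> 'b set set \<Rightarrow> ('a \<Rightarrow> 'b) \<Rightarrow> ('a \<times> 'b) set set" where
  "sierp_edges VG EG VH EH f =
     {{(g, h), (g, h')} | g h h'. g \<in> VG \<and> {h, h'} \<in> EH}
     \<union> {{(g, f g'), (g', f g)} | g g'. {g, g'} \<in> EG}"

definition sierp_domination :: "'a set \<Rightarrow> 'a set set \<Rightarrow> 'b set \<Rightarrow> 'b set set \<Rightarrow> nat" where
  "sierp_domination VG EG VH EH =
     Min ((\<lambda>f. domination_number (sierp_verts VG VH) (sierp_edges VG EG VH EH f)) ` (VG \<rightarrow>\<^sub>E VH))"

definition upper_sierp_domination :: "'a set \<Rightarrow> 'a set set \<Rightarrow> 'b set \<Rightarrow> 'b set set \<Rightarrow> nat" where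
  "upper_sierp_domination VG EG VH EH =
     Max ((\<lambda>f. domination_number (sierp_verts VG VH) (sierp_edges VG EG VH EH f)) ` (VG \<rightarrow>\<^sub>E VH))"

end

theory Submission
  imports Defs
begin

lemma dom_facts:
  assumes "finite V"
  shows "\<exists>S. dominating V E S \<and> card S = domination_number V E"
    and "dominating V E S \<Longrightarrow> domination_number V E \<le> card S"
proof -
  have "{S. dominating V E S} \<subseteq> Pow V" by (auto simp: dominating_def)
  then have "finite {S. dominating V E S}" using assms finite_subset by blast
  then have fin: "finite (card ` {S. dominating V E S})" by simp
  have ne: "dominating V E V" by (auto simp: dominating_def)
  show "\<exists>S. dominating V E S \<and> card S = domination_number V E"
  proof -
    have "domination_number V E \<in> card ` {S. dominating V E S}"
      unfolding domination_number_def using fin ne by (intro Min_in) auto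
    then show ?thesis by auto
  qed
  show "dominating V E S \<Longrightarrow> domination_number V E \<le> card S"
    unfolding domination_number_def using fin by (intro Min_le) auto
qed
lemma upper_f:
  assumes "graph VG EG" "graph VH EH"
  shows "domination_number (sierp_verts VG VH) (sierp_edges VG EG VH EH f)
           \<le> card VG * domination_number VH EH"
proof -
  have fG: "finite VG" and fH: "finite VH" using assms by (auto simp: graph_def)
  obtain D where D: "dominating VH EH D" "card D = domination_number VH EH"
    using dom_facts(1)[OF fH] by blast
  have "dominating (sierp_verts VG VH) (sierp_edges VG EG VH EH f) (VG \<times> D)"
    unfolding dominating_def sierp_verts_def
  proof (intro conjI ballI)
    show "VG \<times> D \<subseteq> VG \<times> VH" using D(1) by (auto simp: dominating_def)
    fix v assume v: "v \<in> VG \<times> VH"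
    then obtain g h where gh: "v = (g,h)" "g \<in> VG" "h \<in> VH" by auto
    then consider "h \<in> D" | u where "u \<in> D" "{u,h} \<in> EH" using D(1) by (auto simp: dominating_def)
    then show "v \<in> VG \<times> D \<or> (\<exists>u\<in>VG \<times> D. {u, v} \<in> sierp_edges VG EG VH EH f)"
    proof cases
      case 1 then show ?thesis using gh by auto
    next
      case (2 u)
      have "{(g,u),(g,h)} \<in> sierp_edges VG EG VH EH f"
        unfolding sierp_edges_def
        by (rule UnI1, rule CollectI, intro exI conjI) (use gh 2 in auto)
      then show ?thesis using gh 2 by blast
    qed
  qed
  then have "domination_number (sierp_verts VG VH) (sierp_edges VG EG VH EH f) \<le> card (VG \<times> D)"
    by (rule dom_facts(2)[rotated]) (simp add: sierp_verts_def fG fH)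
  also have "\<dots> = card VG * domination_number VH EH" using D by (simp add: card_cartesian_product)
  finally show ?thesis .
qed

lemma sierp_edge_cases:
  assumes "{u,(g,h)} \<in> sierp_edges VG EG VH EH f"
  shows "(\<exists>h''. u = (g,h'') \<and> {h'',h} \<in> EH) \<or> (\<exists>g'. {g,g'} \<in> EG \<and> h = f g' \<and> u = (g', f g))"
proof -
  from assms consider (a) g1 h1 h1' where "{u,(g,h)} = {(g1,h1),(g1,h1')}" "{h1,h1'} \<in> EH"
    | (b) g1 g2 where "{u,(g,h)} = {(g1, f g2),(g2, f g1)}" "{g1,g2} \<in> EG"
    unfolding sierp_edges_def by blast
  then show ?thesis
  proof cases
    case a
    then show ?thesis by (auto simp: doubleton_eq_iff insert_commute)
  next
    case b
    then show ?thesis by (auto simp: doubleton_eq_iff insert_commute)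
  qed
qed

lemma lower_f:
  assumes "graph VG EG" "graph VH EH" and f: "f \<in> VG \<rightarrow>\<^sub>E VH"
  shows "card VG * domination_number VH EH
           \<le> domination_number (sierp_verts VG VH) (sierp_edges VG EG VH EH f) + card EG"
proof -
  have fG: "finite VG" and fH: "finite VH" using assms by (auto simp: graph_def)
  have EGsub: "\<And>e. e \<in> EG \<Longrightarrow> e \<subseteq> VG" using assms(1) by (auto simp: graph_def)
  have finEG: "finite EG"
    using fG EGsub by (intro finite_subset[of EG "Pow VG"]) auto
  obtain S where S: "dominating (sierp_verts VG VH) (sierp_edges VG EG VH EH f) S"
      "card S = domination_number (sierp_verts VG VH) (sierp_edges VG EG VH EH f)"
    using dom_facts(1)[of "sierp_verts VG VH"] fG fH by (auto simp: sierp_verts_def)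
  have Ssub: "S \<subseteq> VG \<times> VH" using S(1) by (auto simp: dominating_def sierp_verts_def)
  define Sg where "Sg g = {h. (g,h) \<in> S}" for g
  define B where "B g = {g'. {g,g'} \<in> EG \<and> (g', f g) \<in> S \<and> (g, f g') \<notin> S}" for g
  define T where "T g = Sg g \<union> f ` B g" for g
  have SgH: "Sg g \<subseteq> VH" for g using Ssub by (auto simp: Sg_def)
  have BG: "B g \<subseteq> VG" for g using EGsub by (auto simp: B_def)
  have domT: "dominating VH EH (T g)" if g: "g \<in> VG" for g
    unfolding dominating_def
  proof (intro conjI ballI)
    show "T g \<subseteq> VH" using SgH BG f by (force simp: T_def PiE_iff)
    fix h assume h: "h \<in> VH"
    show "h \<in> T g \<or> (\<exists>u\<in>T g. {u, h} \<in> EH)"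
    proof (cases "(g,h) \<in> S")
      case True then show ?thesis by (auto simp: T_def Sg_def)
    next
      case False
      then obtain u where u: "u \<in> S" "{u,(g,h)} \<in> sierp_edges VG EG VH EH f"
        using S(1) g h unfolding dominating_def sierp_verts_def by blast
      from sierp_edge_cases[OF u(2)] show ?thesis
      proof
        assume "\<exists>h''. u = (g,h'') \<and> {h'',h} \<in> EH"
        then obtain h'' where "u = (g,h'')" "{h'',h} \<in> EH" by blast
        then show ?thesis using u(1) by (auto simp: T_def Sg_def)
      next
        assume "\<exists>g'. {g,g'} \<in> EG \<and> h = f g' \<and> u = (g', f g)"
        then obtain g' where "{g,g'} \<in> EG" "h = f g'" "u = (g', f g)" by blast
        then have "g' \<in> B g" using u(1) False by (auto simp: B_def)
        then show ?thesis using \<open>h = f g'\<close> by (auto simp: T_def)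
      qed
    qed
  qed
  have "card VG * domination_number VH EH = (\<Sum>g\<in>VG. domination_number VH EH)" by simp
  also have "\<dots> \<le> (\<Sum>g\<in>VG. card (T g))"
    by (rule sum_mono) (use domT fH in \<open>auto intro: dom_facts(2)\<close>)
  also have "\<dots> \<le> (\<Sum>g\<in>VG. card (Sg g) + card (B g))"
  proof (rule sum_mono)
    fix g
    have "card (T g) \<le> card (Sg g) + card (f ` B g)" unfolding T_def by (rule card_Un_le)
    also have "card (f ` B g) \<le> card (B g)"
      using BG fG by (intro card_image_le) (auto intro: finite_subset)
    finally show "card (T g) \<le> card (Sg g) + card (B g)" by simp
  qed
  also have "\<dots> = (\<Sum>g\<in>VG. card (Sg g)) + (\<Sum>g\<in>VG. card (B g))" by (rule sum.distrib)
  also have "(\<Sum>g\<in>VG. card (Sg g)) = card S"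
  proof -
    have "S = Sigma VG Sg" using Ssub by (auto simp: Sg_def)
    moreover have "card (Sigma VG Sg) = (\<Sum>g\<in>VG. card (Sg g))"
      using fG SgH fH by (subst card_SigmaI) (auto intro: finite_subset)
    ultimately show ?thesis by simp
  qed
  also have "(\<Sum>g\<in>VG. card (B g)) \<le> card EG"
  proof -
    have "(\<Sum>g\<in>VG. card (B g)) = card (Sigma VG B)"
      using fG BG by (subst card_SigmaI) (auto intro: finite_subset)
    also have "\<dots> \<le> card EG"
    proof (rule card_inj_on_le[where f = "\<lambda>(a,b). {a,b}"])
      show "inj_on (\<lambda>(a, b). {a, b}) (Sigma VG B)"
        unfolding inj_on_def B_def by (auto simp: doubleton_eq_iff)
      show "(\<lambda>(a, b). {a, b}) ` Sigma VG B \<subseteq> EG" by (auto simp: B_def)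
      show "finite EG" by (rule finEG)
    qed
    finally show ?thesis .
  qed
  finally show ?thesis using S(2) by simp
qed

theorem theorem2p1:
  fixes VG :: "'a set" and EG :: "'a set set" and VH :: "'b set" and EH :: "'b set set"
  assumes "graph VG EG" and "graph VH EH"
    and "VG \<noteq> {}" and "VH \<noteq> {}"
  shows "int (card VG) * int (domination_number VH EH) - int (card EG)
           \<le> int (sierp_domination VG EG VH EH)
         \<and> sierp_domination VG EG VH EH \<le> upper_sierp_domination VG EG VH EH
         \<and> upper_sierp_domination VG EG VH EH \<le> card VG * domination_number VH EH"
proof -
  have fG: "finite VG" and fH: "finite VH" using assms by (auto simp: graph_def)
  define F where "F = (\<lambda>f. domination_number (sierp_verts VG VH) (sierp_edges VG EG VH EH f)) ` (VG \<rightarrow>\<^sub>E VH)"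
  have finF: "finite F" unfolding F_def using fG fH by (intro finite_imageI finite_PiE) auto
  have neF: "F \<noteq> {}" unfolding F_def using assms(4) by (auto simp: PiE_eq_empty_iff)
  have smin: "sierp_domination VG EG VH EH = Min F" by (simp add: sierp_domination_def F_def)
  have smax: "upper_sierp_domination VG EG VH EH = Max F" by (simp add: upper_sierp_domination_def F_def)
  have "Min F \<in> F" using finF neF by (rule Min_in)
  then obtain f where f: "f \<in> VG \<rightarrow>\<^sub>E VH"
     and fm: "Min F = domination_number (sierp_verts VG VH) (sierp_edges VG EG VH EH f)"
    unfolding F_def by blast
  have "Max F \<in> F" using finF neF by (rule Max_in)
  then obtain f' where fM: "Max F = domination_number (sierp_verts VG VH) (sierp_edges VG EG VH EH f')"
    unfolding F_def by blast
  have 1: "card VG * domination_number VH EH \<le> Min F + card EG"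
    using lower_f[OF assms(1,2) f] fm by simp
  have 2: "Min F \<le> Max F" using finF \<open>Min F \<in> F\<close> by (rule Max_ge)
  have 3: "Max F \<le> card VG * domination_number VH EH"
    using upper_f[OF assms(1,2)] fM by simp
  have h1: "int (card VG) * int (domination_number VH EH) \<le> int (Min F) + int (card EG)"
    using 1 by (simp only: of_nat_mult[symmetric] of_nat_add[symmetric] of_nat_le_iff)
  show ?thesis unfolding smin smax using h1 2 3 by linarith
qed

end
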